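(* Let $(X,d,b)$ be a bicomplete quasi-pseudometric type space. Let $J:X\to X$ be a continuous single-valued map such that $r\,d(x,y)\le d(Jx,Jy)$ for all $x,y\in X$, for some constant $r>0$, and let $F:X\to CB(X)$ be a set-valued map such that $$H(Fx,Fy)\le \alpha\big[d(Jx,Fx)+d(Jy,Fy)\big]\quad\text{for all }x,y\in X,$$ where $\alpha\in(0,1/2)$. Then for every $\varepsilon>0$, $$\delta(C_\varepsilon)\le \frac{b\varepsilon}{r}\,(1+b+2\alpha b).$$
   Context: A quasi-pseudometric type space $(X,d,b)$ consists of a nonempty set $X$, a constant $b\ge 1$ and a map $d:X\times X\to[0,\infty)$ with $d(x,x)=0$ and $d(x,z)\le b\,[d(x,y)+d(y,z)]$ for all $x,y,z\in X$. It is $T_0$ if $d(x,y)=0=d(y,x)$ implies $x=y$. Write $d^s(x,y)=\max\{d(x,y),d(y,x)\}$; the space is bicomplete if it is $T_0$ and every $d^s$-Cauchy sequence converges in $d^s$. For $x\in X$ and nonempty $A\subseteq X$: $d(x,A)=\inf_{a\in A}d(x,a)$, $d(A,x)=\inf_{a\in A}d(a,x)$; for nonempty $A,B$: $H(A,B)=\max\{\sup_{a\in A}d(a,B),\sup_{b'\in B}d(A,b')\}$. $CB(X)$ denotes the nonempty $d^s$-bounded, $d^s$-closed subsets; continuity of $J$ is with respect to $d^s$. For $\varepsilon>0$, $C_\varepsilon=\{x\in X:\sup_{y\in Fx}d^s(Jx,y)\le\varepsilon\}$, and for $A\subseteq X$, $\delta(A)=\sup_{x,y\in A}d(x,y)$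 (the diameter). *)

theory Defs
  imports "HOL-Analysis.Analysis"
begin

definition qpm_type_space :: "'a set \<Rightarrow> ('a \<Rightarrow> 'a \<Rightarrow> real) \<Rightarrow> real \<Rightarrow> bool" where
  "qpm_type_space X d b \<longleftrightarrow> X \<noteq> {} \<and> b \<ge> 1 \<and>
     (\<forall>x\<in>X. \<forall>y\<in>X. d x y \<ge> 0) \<and> (\<forall>x\<in>X. d x x = 0) \<and>
     (\<forall>x\<in>X. \<forall>y\<in>X. \<forall>z\<in>X. d x z \<le> b * (d x y + d y z))"

definition T0_space :: "'a set \<Rightarrow> ('a \<Rightarrow> 'a \<Rightarrow> real) \<Rightarrow> bool" where
  "T0_space X d \<longleftrightarrow> (\<forall>x\<in>X. \<forall>y\<in>X. d x y = 0 \<and> d y x = 0 \<longrightarrow> x = y)"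

definition dsym :: "('a \<Rightarrow> 'a \<Rightarrow> real) \<Rightarrow> 'a \<Rightarrow> 'a \<Rightarrow> real" where
  "dsym d x y = max (d x y) (d y x)"

definition ds_cauchy :: "('a \<Rightarrow> 'a \<Rightarrow> real) \<Rightarrow> (nat \<Rightarrow> 'a) \<Rightarrow> bool" where
  "ds_cauchy d s \<longleftrightarrow> (\<forall>e>0. \<exists>N. \<forall>m\<ge>N. \<forall>n\<ge>N. dsym d (s m) (s n) < e)"

definition ds_converges_to :: "('a \<Rightarrow> 'a \<Rightarrow> real) \<Rightarrow> (nat \<Rightarrow> 'a) \<Rightarrow> 'a \<Rightarrow> bool" where
  "ds_converges_to d s x \<longleftrightarrow> (\<lambda>n. dsym d (s n) x) \<longlonglongrightarrow> 0"

definition bicomplete :: "'a set \<Rightarrow> ('a \<Rightarrow> 'a \<Rightarrow> real) \<Rightarrow> bool" where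
  "bicomplete X d \<longleftrightarrow> T0_space X d \<and>
     (\<forall>s. (\<forall>n. s n \<in> X) \<and> ds_cauchy d s \<longrightarrow> (\<exists>x\<in>X. ds_converges_to d s x))"

definition dist_pt_set :: "('a \<Rightarrow> 'a \<Rightarrow> real) \<Rightarrow> 'a \<Rightarrow> 'a set \<Rightarrow> real" where
  "dist_pt_set d x A = (INF a\<in>A. d x a)"

definition dist_set_pt :: "('a \<Rightarrow> 'a \<Rightarrow> real) \<Rightarrow> 'a set \<Rightarrow> 'a \<Rightarrow> real" where
  "dist_set_pt d A x = (INF a\<in>A. d a x)"

definition hausdorff_qpm :: "('a \<Rightarrow> 'a \<Rightarrow> real) \<Rightarrow> 'a set \<Rightarrow> 'a set \<Rightarrow> ereal" where
  "hausdorff_qpm d A B = max (SUP a\<in>A. ereal (dist_pt_set d a B)) (SUP b'\<in>B. ereal (dist_set_pt d A b'))"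

definition ds_bounded :: "('a \<Rightarrow> 'a \<Rightarrow> real) \<Rightarrow> 'a set \<Rightarrow> bool" where
  "ds_bounded d A \<longleftrightarrow> (\<exists>M. \<forall>x\<in>A. \<forall>y\<in>A. dsym d x y \<le> M)"

definition ds_closed :: "'a set \<Rightarrow> ('a \<Rightarrow> 'a \<Rightarrow> real) \<Rightarrow> 'a set \<Rightarrow> bool" where
  "ds_closed X d A \<longleftrightarrow> (\<forall>s x. (\<forall>n. s n \<in> A) \<and> x \<in> X \<and> ds_converges_to d s x \<longrightarrow> x \<in> A)"

definition CB :: "'a set \<Rightarrow> ('a \<Rightarrow> 'a \<Rightarrow> real) \<Rightarrow> 'a set set" where
  "CB X d = {A. A \<subseteq> X \<and> A \<noteq> {} \<and> ds_bounded d A \<and> ds_closed X d A}"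

definition ds_continuous :: "'a set \<Rightarrow> ('a \<Rightarrow> 'a \<Rightarrow> real) \<Rightarrow> ('a \<Rightarrow> 'a) \<Rightarrow> bool" where
  "ds_continuous X d J \<longleftrightarrow> (\<forall>s x. (\<forall>n. s n \<in> X) \<and> x \<in> X \<and> ds_converges_to d s x
      \<longrightarrow> ds_converges_to d (\<lambda>n. J (s n)) (J x))"

definition C_eps :: "'a set \<Rightarrow> ('a \<Rightarrow> 'a \<Rightarrow> real) \<Rightarrow> ('a \<Rightarrow> 'a) \<Rightarrow> ('a \<Rightarrow> 'a set) \<Rightarrow> real \<Rightarrow> 'a set" where
  "C_eps X d J F \<epsilon> = {x\<in>X. (SUP y\<in>F x. ereal (dsym d (J x) y)) \<le> ereal \<epsilon>}"

definition diam_qpm :: "('a \<Rightarrow> 'a \<Rightarrow> real) \<Rightarrow> 'a set \<Rightarrow> ereal" where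
  "diam_qpm d A = (SUP p\<in>A \<times> A. ereal (d (fst p) (snd p)))"

end

theory Submission
  imports Defs
begin

theorem mainTheorem13:
  fixes X :: "'a set" and d :: "'a \<Rightarrow> 'a \<Rightarrow> real" and b r \<alpha> \<epsilon> :: real
    and J :: "'a \<Rightarrow> 'a" and F :: "'a \<Rightarrow> 'a set"
  assumes "qpm_type_space X d b"
    and "bicomplete X d"
    and "\<forall>x\<in>X. J x \<in> X"
    and "ds_continuous X d J"
    and "r > 0"
    and "\<forall>x\<in>X. \<forall>y\<in>X. r * d x y \<le> d (J x) (J y)"
    and "\<forall>x\<in>X. F x \<in> CB X d"
    and "0 < \<alpha>" and "\<alpha> < 1/2"
    and "\<forall>x\<in>X. \<forall>y\<in>X. hausdorff_qpm d (F x) (F y)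
            \<le> ereal (\<alpha> * (dist_pt_set d (J x) (F x) + dist_pt_set d (J y) (F y)))"
    and "\<epsilon> > 0"
  shows "diam_qpm d (C_eps X d J F \<epsilon>) \<le> ereal (b * \<epsilon> / r * (1 + b + 2 * \<alpha> * b))"
proof -
  have b1: "b \<ge> 1" and nn: "\<forall>x\<in>X. \<forall>y\<in>X. d x y \<ge> 0"
    and tri: "\<forall>x\<in>X. \<forall>y\<in>X. \<forall>z\<in>X. d x z \<le> b * (d x y + d y z)"
    using assms(1) unfolding qpm_type_space_def by auto
  have FX: "\<And>x. x \<in> X \<Longrightarrow> F x \<subseteq> X \<and> F x \<noteq> {}" using assms(7) unfolding CB_def by auto
  define B where "B = b * \<epsilon> * (1 + b + 2 * \<alpha> * b)"
  have ceps: "\<And>x y. x \<in> C_eps X d J F \<epsilon> \<Longrightarrow> y \<in> F x \<Longrightarrow> d (J x) y \<le> \<epsilon> \<and> d y (J x) \<le> \<epsilon>"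
  proof -
    fix x y assume x: "x \<in> C_eps X d J F \<epsilon>" and y: "y \<in> F x"
    have "ereal (dsym d (J x) y) \<le> (SUP y\<in>F x. ereal (dsym d (J x) y))"
      using y by (rule SUP_upper)
    also have "\<dots> \<le> ereal \<epsilon>" using x unfolding C_eps_def by auto
    finally show "d (J x) y \<le> \<epsilon> \<and> d y (J x) \<le> \<epsilon>" unfolding dsym_def by auto
  qed
  have dps: "\<And>z x. z \<in> X \<Longrightarrow> x \<in> X \<Longrightarrow> bdd_below ((\<lambda>a. d z a) ` F x)"
    using FX nn by (meson bdd_belowI2 subsetD)
  have dps_le: "\<And>z x a. z \<in> X \<Longrightarrow> x \<in> X \<Longrightarrow> a \<in> F x \<Longrightarrow> dist_pt_set d z (F x) \<le> d z a"
    unfolding dist_pt_set_def using dps by (meson cINF_lower)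
  have key: "r * d x y \<le> B" if x: "x \<in> C_eps X d J F \<epsilon>" and y: "y \<in> C_eps X d J F \<epsilon>" for x y
  proof (rule field_le_epsilon)
    fix e :: real assume e: "e > 0"
    have xX: "x \<in> X" and yX: "y \<in> X" using x y unfolding C_eps_def by auto
    obtain u where u: "u \<in> F x" using FX xX by auto
    have uX: "u \<in> X" using FX xX u by auto
    have Jx: "J x \<in> X" "J y \<in> X" using assms(3) xX yX by auto
    have e1: "d (J x) u \<le> \<epsilon>" using ceps x u by auto
    have dx: "dist_pt_set d (J x) (F x) \<le> \<epsilon>" using dps_le[OF Jx(1) xX u] e1 by linarith
    obtain w where w: "w \<in> F y" using FX yX by auto
    have dy: "dist_pt_set d (J y) (F y) \<le> \<epsilon>" using dps_le[OF Jx(2) yX w] ceps y w by force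
    have "ereal (dist_pt_set d u (F y)) \<le> (SUP a\<in>F x. ereal (dist_pt_set d a (F y)))"
      using u by (rule SUP_upper)
    also have "\<dots> \<le> hausdorff_qpm d (F x) (F y)" unfolding hausdorff_qpm_def by simp
    also have "\<dots> \<le> ereal (\<alpha> * (dist_pt_set d (J x) (F x) + dist_pt_set d (J y) (F y)))"
      using assms(10) xX yX by auto
    finally have h0: "dist_pt_set d u (F y) \<le> \<alpha> * (dist_pt_set d (J x) (F x) + dist_pt_set d (J y) (F y))"
      by simp
    have "\<alpha> * (dist_pt_set d (J x) (F x) + dist_pt_set d (J y) (F y)) \<le> \<alpha> * (\<epsilon> + \<epsilon>)"
      using dx dy assms(8) by (intro mult_left_mono) auto
    then have h1: "dist_pt_set d u (F y) \<le> 2 * \<alpha> * \<epsilon>" using h0 by simp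
    define \<eta> where "\<eta> = e / (b * b)"
    have eta: "\<eta> > 0" using e b1 unfolding \<eta>_def by simp
    have "\<exists>v\<in>F y. d u v < dist_pt_set d u (F y) + \<eta>"
    proof -
      have "(INF a\<in>F y. d u a) < dist_pt_set d u (F y) + \<eta>" unfolding dist_pt_set_def using eta by simp
      then show ?thesis
        using FX[OF yX] cInf_less_iff[of "d u ` F y" "dist_pt_set d u (F y) + \<eta>"] dps[OF uX yX] by (auto simp: dist_pt_set_def)
    qed
    then obtain v where v: "v \<in> F y" and dv: "d u v < 2 * \<alpha> * \<epsilon> + \<eta>" using h1 by force
    have vX: "v \<in> X" using FX yX v by auto
    have e2: "d v (J y) \<le> \<epsilon>" using ceps y v by auto
    have "d u (J y) \<le> b * (d u v + d v (J y))" using tri uX vX Jx by auto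
    also have "\<dots> \<le> b * (2 * \<alpha> * \<epsilon> + \<eta> + \<epsilon>)" using dv e2 b1 by (intro mult_left_mono) auto
    finally have h2: "d u (J y) \<le> b * (2 * \<alpha> * \<epsilon> + \<eta> + \<epsilon>)" .
    have "r * d x y \<le> d (J x) (J y)" using assms(6) xX yX by auto
    also have "\<dots> \<le> b * (d (J x) u + d u (J y))" using tri uX Jx by auto
    also have "\<dots> \<le> b * (\<epsilon> + b * (2 * \<alpha> * \<epsilon> + \<eta> + \<epsilon>))" using e1 h2 b1 by (intro mult_left_mono) auto
    also have "\<dots> = B + b * b * \<eta>" unfolding B_def by (simp add: algebra_simps)
    also have "b * b * \<eta> = e" unfolding \<eta>_def using b1 by simp
    finally show "r * d x y \<le> B + e" .
  qed
  show ?thesis unfolding diam_qpm_def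
  proof (rule SUP_least)
    fix p assume "p \<in> C_eps X d J F \<epsilon> \<times> C_eps X d J F \<epsilon>"
    then have "r * d (fst p) (snd p) \<le> B" using key by auto
    then have "d (fst p) (snd p) \<le> B / r" using assms(5) by (simp add: field_simps)
    also have "B / r = b * \<epsilon> / r * (1 + b + 2 * \<alpha> * b)" unfolding B_def by simp
    finally show "ereal (d (fst p) (snd p)) \<le> ereal (b * \<epsilon> / r * (1 + b + 2 * \<alpha> * b))" by simp
  qed
qed

end
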